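(* Let $L>0$, $\mu\in(-\infty,0]$, $\kappa:=\mu/L$, and $f\in\mathcal{F}_{\mu,L}(\mathbb{R}^d)$. Define $\bar h(\kappa):=\frac{3}{1+\kappa+\sqrt{1-\kappa+\kappa^2}}\in[\tfrac32,2)$. Let $x_0\in\mathbb{R}^d$, $h_0,\dots,h_{N-1}\in(0,\bar h(\kappa)]$, and $x_{i+1}=x_i-\frac{h_i}{L}\nabla f(x_i)$ for $i=0,\dots,N-1$. Define $$p(h,\kappa)=\begin{cases}2h-h^2\frac{-\kappa}{1-\kappa}, & h\in(0,1],\\[2pt] \frac{h(2-h)(2-\kappa h)}{2-(1+\kappa)h}, & h\in[1,\bar h(\kappa)].\end{cases}$$ Then $$\min_{0\le i\le N}\|\nabla f(x_i)\|^2\le\frac{2L\,[f(x_0)-f(x_N)]}{\sum_{i=0}^{N-1}p(h_i,\kappa)}.$$ Additionally, if $f$ is bounded from below and $f_*:=\inf_{x}f(x)$, then $$\min_{0\le i\le N}\|\nabla f(x_i)\|^2\le\frac{2L\,[f(x_0)-f_*]}{1+\sum_{i=0}^{N-1}p(h_i,\kappa)}.$$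
   Context: For $L>0$ and $\mu\le L$, $\mathcal{F}_{\mu,L}(\mathbb{R}^d)$ denotes the class of differentiable functions $f:\mathbb{R}^d\to\mathbb{R}$ such that both $\frac L2\|\cdot\|^2-f$ and $f-\frac{\mu}{2}\|\cdot\|^2$ are convex. *)

theory Defs
  imports "HOL-Analysis.Analysis"
begin

definition smooth_weakly_convex_class :: "real \<Rightarrow> real \<Rightarrow> ('a::euclidean_space \<Rightarrow> real) \<Rightarrow> bool" where
  "smooth_weakly_convex_class \<mu> L f \<longleftrightarrow>
     (\<forall>x. f differentiable (at x)) \<and>
     convex_on UNIV (\<lambda>x. L / 2 * (norm x)\<^sup>2 - f x) \<and>
     convex_on UNIV (\<lambda>x. f x - \<mu> / 2 * (norm x)\<^sup>2)"

definition hbar :: "real \<Rightarrow> real" where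
  "hbar \<kappa> = 3 / (1 + \<kappa> + sqrt (1 - \<kappa> + \<kappa>\<^sup>2))"

definition pfun :: "real \<Rightarrow> real \<Rightarrow> real" where
  "pfun h \<kappa> = (if h \<le> 1 then 2 * h - h\<^sup>2 * ((- \<kappa>) / (1 - \<kappa>))
                else h * (2 - h) * (2 - \<kappa> * h) / (2 - (1 + \<kappa>) * h))"

end

theory Submission
  imports Defs
begin


lemma convex_first_order:
  fixes F :: "'a::euclidean_space \<Rightarrow> real"
  assumes cv: "convex_on UNIV F"
    and d: "(F has_derivative (\<lambda>v. G \<bullet> v)) (at x)"
  shows "F y \<ge> F x + G \<bullet> (y - x)"
proof -
  define k where "k = (\<lambda>t::real. F (x + t *\<^sub>R (y - x)))"
  have kc: "convex_on UNIV k"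
  proof (rule convex_onI)
    fix s a b :: real
    assume "s > 0" "s < 1"
    have "x + ((1 - s) *\<^sub>R a + s *\<^sub>R b) *\<^sub>R (y - x)
        = (1 - s) *\<^sub>R (x + a *\<^sub>R (y - x)) + s *\<^sub>R (x + b *\<^sub>R (y - x))"
      by (simp add: algebra_simps)
    then show "k ((1 - s) *\<^sub>R a + s *\<^sub>R b) \<le> (1 - s) * k a + s * k b"
      unfolding k_def using convex_onD[OF cv, of s] \<open>s > 0\<close> \<open>s < 1\<close> by simp
  qed simp
  have "((\<lambda>t::real. x + t *\<^sub>R (y - x)) has_derivative (\<lambda>t. t *\<^sub>R (y - x))) (at 0)"
    by (auto intro!: derivative_eq_intros)
  moreover have "(F has_derivative (\<lambda>v. G \<bullet> v)) (at (x + 0 *\<^sub>R (y - x)))" using d by simp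
  ultimately have "(k has_derivative (\<lambda>t. G \<bullet> (t *\<^sub>R (y - x)))) (at 0)"
    unfolding k_def by (rule has_derivative_compose)
  hence "(k has_field_derivative (G \<bullet> (y - x))) (at 0)"
    by (simp add: has_field_derivative_def mult.commute[of _ "G \<bullet> (y - x)"])
  hence "k 1 - k 0 \<ge> (G \<bullet> (y - x)) * (1 - 0)"
    by (intro convex_on_imp_above_tangent[OF kc]) auto
  thus ?thesis unfolding k_def by simp
qed


lemma cocoercive:
  fixes F :: "'a::euclidean_space \<Rightarrow> real" and G :: "'a \<Rightarrow> 'a"
  assumes Lp: "L' > 0"
    and low: "\<And>x y. F y \<ge> F x + G x \<bullet> (y - x)"
    and up: "\<And>x y. F y \<le> F x + G x \<bullet> (y - x) + L' / 2 * (norm (y - x))\<^sup>2"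
  shows "F x \<ge> F y + G y \<bullet> (x - y) + (norm (G x - G y))\<^sup>2 / (2 * L')"
proof -
  define D where "D = G x - G y"
  define z where "z = x - (1 / L') *\<^sub>R D"
  have 1: "F z \<ge> F y + G y \<bullet> (z - y)" by (rule low)
  have 2: "F z \<le> F x + G x \<bullet> (z - x) + L' / 2 * (norm (z - x))\<^sup>2" by (rule up)
  have e1: "G y \<bullet> (z - y) = G y \<bullet> (x - y) - (G y \<bullet> D) / L'"
    unfolding z_def by (simp add: inner_diff_right)
  have e2: "G x \<bullet> (z - x) = - ((G x \<bullet> D) / L')"
    unfolding z_def by (simp add: inner_diff_right)
  have e3: "(norm (z - x))\<^sup>2 = (norm D)\<^sup>2 / L'^2"
    unfolding z_def using Lp by (simp add: power_divide)
  have e4: "G x \<bullet> D - G y \<bullet> D = (norm D)\<^sup>2"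
    unfolding D_def by (simp add: power2_norm_eq_inner inner_diff_left)
  have e5: "L' / 2 * ((norm D)\<^sup>2 / L'^2) = (norm D)\<^sup>2 / (2 * L')"
    using Lp by (simp add: power2_eq_square field_simps)
  have e6: "(G x \<bullet> D) / L' - (G y \<bullet> D) / L' = (norm D)\<^sup>2 / L'"
    using e4 by (simp add: diff_divide_distrib[symmetric])
  have e7: "(norm D)\<^sup>2 / L' - (norm D)\<^sup>2 / (2 * L') = (norm D)\<^sup>2 / (2 * L')"
    using Lp by (simp add: field_simps)
  have 2: "F z \<le> F x + G x \<bullet> (z - x) + (norm D)\<^sup>2 / (2 * L')" using 2 e3 e5 by simp
  from 1 2 e1 e2 e6 e7 show ?thesis unfolding D_def[symmetric] by linarith
qed

lemma class_ineqs:
  fixes f :: "'a::euclidean_space \<Rightarrow> real" and g :: "'a \<Rightarrow> 'a"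
  assumes L_pos: "L > 0" and mu: "\<mu> \<le> 0"
    and f_class: "smooth_weakly_convex_class \<mu> L f"
    and grad: "\<And>y. (f has_derivative (\<lambda>v. g y \<bullet> v)) (at y)"
  shows interp: "f x \<ge> f y + g y \<bullet> (x - y) + \<mu> / 2 * (norm (x - y))\<^sup>2
                   + (norm (g x - g y - \<mu> *\<^sub>R (x - y)))\<^sup>2 / (2 * (L - \<mu>))"
    and descent: "f y \<le> f x + g x \<bullet> (y - x) + L / 2 * (norm (y - x))\<^sup>2"
proof -
  define F where "F = (\<lambda>z. f z - \<mu> / 2 * (z \<bullet> z))"
  define G where "G = (\<lambda>z. g z - \<mu> *\<^sub>R z)"
  define P where "P = (\<lambda>z. L / 2 * (z \<bullet> z) - f z)"
  have cF: "convex_on UNIV F" using f_class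
    unfolding smooth_weakly_convex_class_def F_def by (simp add: power2_norm_eq_inner)
  have cP: "convex_on UNIV P" using f_class
    unfolding smooth_weakly_convex_class_def P_def by (simp add: power2_norm_eq_inner)
  have dq: "((\<lambda>z. z \<bullet> z) has_derivative (\<lambda>v. 2 * (z \<bullet> v))) (at z)" for z :: 'a
    by (rule has_derivative_eq_rhs, rule has_derivative_inner[OF has_derivative_ident has_derivative_ident])
       (auto simp: inner_commute)
  have dF: "(F has_derivative (\<lambda>v. G z \<bullet> v)) (at z)" for z
    unfolding F_def G_def
    by (rule has_derivative_eq_rhs, rule has_derivative_diff[OF grad has_derivative_mult_right[OF dq]])
       (auto simp: inner_diff_left)
  have dP: "(P has_derivative (\<lambda>v. (L *\<^sub>R z - g z) \<bullet> v)) (at z)" for z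
    unfolding P_def
    by (rule has_derivative_eq_rhs, rule has_derivative_diff[OF has_derivative_mult_right[OF dq] grad])
       (auto simp: inner_diff_left)
  have lowF: "F y \<ge> F x + G x \<bullet> (y - x)" for x y
    by (rule convex_first_order[OF cF dF])
  have lowP: "P y \<ge> P x + (L *\<^sub>R x - g x) \<bullet> (y - x)" for x y
    by (rule convex_first_order[OF cP dP])
  have sq: "y \<bullet> y = x \<bullet> x + 2 * (x \<bullet> (y - x)) + (norm (y - x))\<^sup>2" for x y :: 'a
    by (simp add: power2_norm_eq_inner inner_diff_left inner_diff_right inner_commute)
  have desc: "f y \<le> f x + g x \<bullet> (y - x) + L / 2 * (norm (y - x))\<^sup>2" for x y
  proof -
    have "P y \<ge> P x + (L *\<^sub>R x - g x) \<bullet> (y - x)" by (rule lowP)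
    hence "L / 2 * (y \<bullet> y) - f y \<ge> L / 2 * (x \<bullet> x) - f x + L * (x \<bullet> (y - x)) - g x \<bullet> (y - x)"
      unfolding P_def by (simp add: inner_diff_left)
    moreover have "L / 2 * (y \<bullet> y) = L / 2 * (x \<bullet> x) + L * (x \<bullet> (y - x)) + L / 2 * (norm (y - x))\<^sup>2"
      using arg_cong[OF sq[of y x], of "\<lambda>t. L / 2 * t"] by (simp add: algebra_simps)
    ultimately show ?thesis by linarith
  qed
  then show "f y \<le> f x + g x \<bullet> (y - x) + L / 2 * (norm (y - x))\<^sup>2" .
  have upF: "F y \<le> F x + G x \<bullet> (y - x) + (L - \<mu>) / 2 * (norm (y - x))\<^sup>2" for x y
  proof -
    have "f y \<le> f x + g x \<bullet> (y - x) + L / 2 * (norm (y - x))\<^sup>2" by (rule desc)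
    moreover have "\<mu> / 2 * (y \<bullet> y) = \<mu> / 2 * (x \<bullet> x) + \<mu> * (x \<bullet> (y - x)) + \<mu> / 2 * (norm (y - x))\<^sup>2"
      using arg_cong[OF sq[of y x], of "\<lambda>t. \<mu> / 2 * t"] by (simp add: algebra_simps)
    moreover have "G x \<bullet> (y - x) = g x \<bullet> (y - x) - \<mu> * (x \<bullet> (y - x))"
      unfolding G_def by (simp add: inner_diff_left)
    moreover have "(L - \<mu>) / 2 * (norm (y - x))\<^sup>2 = L / 2 * (norm (y - x))\<^sup>2 - \<mu> / 2 * (norm (y - x))\<^sup>2"
      by (simp add: diff_divide_distrib left_diff_distrib)
    ultimately show ?thesis unfolding F_def by linarith
  qed
  have Lm: "L - \<mu> > 0" using L_pos mu by simp
  have co: "F x \<ge> F y + G y \<bullet> (x - y) + (norm (G x - G y))\<^sup>2 / (2 * (L - \<mu>))"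
    by (rule cocoercive[OF Lm lowF upF])
  have "G x - G y = g x - g y - \<mu> *\<^sub>R (x - y)" unfolding G_def by (simp add: algebra_simps)
  with co sq[of x y] show "f x \<ge> f y + g y \<bullet> (x - y) + \<mu> / 2 * (norm (x - y))\<^sup>2
                   + (norm (g x - g y - \<mu> *\<^sub>R (x - y)))\<^sup>2 / (2 * (L - \<mu>))"
    unfolding F_def G_def by (simp add: inner_diff_left algebra_simps)
qed


lemma q_nonneg:
  fixes K h :: real
  assumes K: "K \<le> 0" and h: "0 < h" "h \<le> hbar K"
  shows "K * h\<^sup>2 - 2 * (1 + K) * h + 3 \<ge> 0"
proof -
  define S where "S = sqrt (1 - K + K\<^sup>2)"
  define H where "H = hbar K"
  have nn: "0 \<le> 1 - K + K\<^sup>2" using K zero_le_power2[of K] by linarith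
  have S2: "S\<^sup>2 = 1 - K + K\<^sup>2" unfolding S_def by (rule real_sqrt_pow2[OF nn])
  have S0: "S \<ge> 0" unfolding S_def using nn by simp
  have den: "1 + K + S > 0"
  proof (cases "1 + K > 0")
    case True then show ?thesis using S0 by linarith
  next
    case False
    hence "K < 0" by simp
    hence "(- (1 + K))\<^sup>2 < S\<^sup>2" using S2 by (simp add: power2_eq_square algebra_simps)
    hence "- (1 + K) < S" using S0 by (rule power2_less_imp_less)
    then show ?thesis by linarith
  qed
  have "H = 3 / (1 + K + S)" unfolding H_def hbar_def S_def by simp
  hence HD: "H * (1 + K + S) = 3" using den by (simp add: eq_divide_eq)
  have Hpos: "H > 0" using HD den by (metis mult_pos_pos pos_divide_less_eq zero_less_numeral nonzero_mult_div_cancel_right less_irrefl divide_pos_pos zero_less_mult_pos2)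
  have KH: "K * H = 1 + K - S"
  proof -
    have "K * H * (1 + K + S) = K * (H * (1 + K + S))" by (simp only: mult.assoc)
    hence "K * H * (1 + K + S) = 3 * K" using HD by simp
    also have "3 * K = (1 + K - S) * (1 + K + S)" using S2 by (simp add: power2_eq_square algebra_simps)
    finally show ?thesis using den by simp
  qed
  have id: "K * h\<^sup>2 - 2 * (1 + K) * h + 3 = K * h * (h - H) + h * (K * H - 2 * (1 + K)) + 3"
    by (simp add: power2_eq_square algebra_simps)
  have e: "h * (K * H - 2 * (1 + K)) + 3 = (H - h) * (1 + K + S)"
  proof -
    have r: "(H - h) * (1 + K + S) = 3 - (h + h * K + h * S)" using HD by (simp add: algebra_simps)
    have l: "h * (K * H - 2 * (1 + K)) = h * (K * H) - 2 * h - 2 * h * K" by (simp add: algebra_simps)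
    have m0: "h * (K * H) = h * (1 + K - S)" using KH by simp
    have m: "h * (K * H) = h + h * K - h * S" using m0 by (simp add: algebra_simps)
    show ?thesis using r l m by linarith
  qed
  have t1: "K * h * (h - H) \<ge> 0"
    using K h unfolding H_def by (simp add: mult_nonpos_nonpos mult_nonpos_nonneg)
  have t2: "(H - h) * (1 + K + S) \<ge> 0" using h den unfolding H_def by simp
  show ?thesis using id e t1 t2 by linarith
qed

lemma scalar_step:
  fixes a b c F L K h m :: real
  assumes L: "L > 0" and K: "K \<le> 0" and h: "0 < h" "h \<le> hbar K"
    and A: "2 * L * (1 - K) * F \<ge> 2 * h * (1 - K) * c + K * (1 - K) * h\<^sup>2 * a + (1 - K * h)\<^sup>2 * a - 2 * (1 - K * h) * c + b"
    and B: "- (2 * L * (1 - K) * F) \<ge> - 2 * h * (1 - K) * a + K * (1 - K) * h\<^sup>2 * a + (1 - K * h)\<^sup>2 * a - 2 * (1 - K * h) * c + b"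
    and abc: "a + b - 2 * c \<ge> 0" and ma: "m \<le> a" and mb: "m \<le> b"
  shows "pfun h K * m \<le> 2 * L * F \<and> pfun h K > 0"
proof -
  define X where "X = 2 * L * (1 - K) * F"
  have K1: "1 - K > 0" using K by simp
  have q: "K * h\<^sup>2 - 2 * (1 + K) * h + 3 \<ge> 0" by (rule q_nonneg[OF K h])
  show ?thesis
  proof (cases "h \<le> 1")
    case True
    define P where "P = 2 * h * (1 - K) + K * h\<^sup>2"
    have pf: "pfun h K * (1 - K) = P" unfolding pfun_def P_def using True K1
      by (simp add: field_simps power2_eq_square)
    have RA: "2 * h * (1 - K) * c + K * (1 - K) * h\<^sup>2 * a + (1 - K * h)\<^sup>2 * a - 2 * (1 - K * h) * c + b
       = (P - h) * a + h * b + (1 - h) * (a + b - 2 * c)"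
      unfolding P_def by (simp add: power2_eq_square algebra_simps)
    have Ph: "P - h \<ge> 0"
    proof -
      have "P - h = h * (1 - 2 * K + K * h)" unfolding P_def by (simp add: power2_eq_square algebra_simps)
      moreover have "1 - 2 * K + K * h \<ge> 0"
      proof -
        have "K * (1 - h) \<le> 0" using K True by (simp add: mult_nonpos_nonneg)
        hence "K * h \<ge> K" by (simp add: algebra_simps)
        thus ?thesis using K by linarith
      qed
      ultimately show ?thesis using h by simp
    qed
    have "(P - h) * a \<ge> (P - h) * m" using Ph ma by (simp add: mult_left_mono)
    moreover have "h * b \<ge> h * m" using h mb by simp
    moreover have "(1 - h) * (a + b - 2 * c) \<ge> 0" using True abc by simp
    ultimately have "X \<ge> P * m" using A RA unfolding X_def by (simp add: algebra_simps) 
    moreover have "pfun h K * m * (1 - K) = P * m" by (simp add: pf[symmetric] mult_ac)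
    moreover have "2 * L * F * (1 - K) = X" by (simp add: X_def mult_ac)
    ultimately have "pfun h K * m * (1 - K) \<le> 2 * L * F * (1 - K)" by linarith
    hence r1: "pfun h K * m \<le> 2 * L * F" using K1 by simp
    have "P > 0" using Ph h by linarith
    hence "pfun h K > 0" using pf K1 by (metis zero_less_mult_pos2)
    with r1 show ?thesis by simp
  next
    case False
    define D where "D = 2 - (1 + K) * h"
    have "2 * (1 + K) * h \<le> 3"
    proof -
      have "K * h\<^sup>2 \<le> 0" using K by (simp add: mult_nonpos_nonneg)
      thus ?thesis using q by linarith
    qed
    hence Dp: "D > 0" unfolding D_def by linarith
    define Q where "Q = h * (1 - K) * (K * h\<^sup>2 - 2 * (1 + K) * h + 3)"
    define E where "E = D + 2 * h - 2"
    have pf: "pfun h K * D * (1 - K) = Q + E"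
      unfolding pfun_def Q_def E_def D_def using False Dp unfolding D_def
      by (simp add: field_simps power2_eq_square)
    have c1: "(D + h - 1) * X \<ge> (D + h - 1) * (2 * h * (1 - K) * c + K * (1 - K) * h\<^sup>2 * a + (1 - K * h)\<^sup>2 * a - 2 * (1 - K * h) * c + b)"
      using A False Dp unfolding X_def by (intro mult_left_mono) auto
    have c2: "(h - 1) * (- X) \<ge> (h - 1) * (- 2 * h * (1 - K) * a + K * (1 - K) * h\<^sup>2 * a + (1 - K * h)\<^sup>2 * a - 2 * (1 - K * h) * c + b)"
      using B False unfolding X_def by (intro mult_left_mono) auto
    have idt: "(D + h - 1) * (2 * h * (1 - K) * c + K * (1 - K) * h\<^sup>2 * a + (1 - K * h)\<^sup>2 * a - 2 * (1 - K * h) * c + b)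
       + (h - 1) * (- 2 * h * (1 - K) * a + K * (1 - K) * h\<^sup>2 * a + (1 - K * h)\<^sup>2 * a - 2 * (1 - K * h) * c + b)
       = Q * a + E * b"
      unfolding D_def Q_def E_def by (simp add: power2_eq_square algebra_simps)
    have e3: "(D + h - 1) * X + (h - 1) * (- X) = D * X" by (simp add: algebra_simps)
    have DX: "D * X \<ge> Q * a + E * b"
      using c1 c2 idt e3 by linarith
    have w1: "Q \<ge> 0" unfolding Q_def using h K1 q by simp
    have w2: "E > 0" unfolding E_def using Dp False by simp
    have "Q * a \<ge> Q * m" using w1 ma by (simp add: mult_left_mono)
    moreover have "E * b \<ge> E * m" using w2 mb by simp
    moreover have "(pfun h K * D * (1 - K)) * m = Q * m + E * m" using pf by (simp add: distrib_right)
    ultimately have "D * X \<ge> (pfun h K * D * (1 - K)) * m" using DX by linarith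
    hence "(pfun h K * m) * (D * (1 - K)) \<le> (2 * L * F) * (D * (1 - K))" unfolding X_def by (simp add: algebra_simps)
    hence r1: "pfun h K * m \<le> 2 * L * F" using Dp K1 by simp
    have "pfun h K * D * (1 - K) > 0" using pf w1 w2 by linarith
    hence "pfun h K > 0" using Dp K1 by (metis mult_pos_pos zero_less_mult_pos2)
    with r1 show ?thesis by simp
  qed
qed



lemma vec_to_scalar:
  fixes f :: "'a::euclidean_space \<Rightarrow> real" and g :: "'a \<Rightarrow> 'a"
  assumes L: "L > 0" and mu: "\<mu> \<le> 0"
    and iA: "f x0 \<ge> f x1 + g x1 \<bullet> (x0 - x1) + \<mu> / 2 * (norm (x0 - x1))\<^sup>2
                   + (norm (g x0 - g x1 - \<mu> *\<^sub>R (x0 - x1)))\<^sup>2 / (2 * (L - \<mu>))"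
    and iB: "f x1 \<ge> f x0 + g x0 \<bullet> (x1 - x0) + \<mu> / 2 * (norm (x1 - x0))\<^sup>2
                   + (norm (g x1 - g x0 - \<mu> *\<^sub>R (x1 - x0)))\<^sup>2 / (2 * (L - \<mu>))"
    and x1: "x1 = x0 - (hh / L) *\<^sub>R g x0"
  shows "2 * L * (1 - \<mu> / L) * (f x0 - f x1) \<ge> 2 * hh * (1 - \<mu> / L) * (g x0 \<bullet> g x1) + (\<mu> / L) * (1 - \<mu> / L) * hh\<^sup>2 * (norm (g x0))\<^sup>2 + (1 - (\<mu> / L) * hh)\<^sup>2 * (norm (g x0))\<^sup>2 - 2 * (1 - (\<mu> / L) * hh) * (g x0 \<bullet> g x1) + (norm (g x1))\<^sup>2"
    and "- (2 * L * (1 - \<mu> / L) * (f x0 - f x1)) \<ge> - 2 * hh * (1 - \<mu> / L) * (norm (g x0))\<^sup>2 + (\<mu> / L) * (1 - \<mu> / L) * hh\<^sup>2 * (norm (g x0))\<^sup>2 + (1 - (\<mu> / L) * hh)\<^sup>2 * (norm (g x0))\<^sup>2 - 2 * (1 - (\<mu> / L) * hh) * (g x0 \<bullet> g x1) + (norm (g x1))\<^sup>2"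
    and "(norm (g x0))\<^sup>2 + (norm (g x1))\<^sup>2 - 2 * (g x0 \<bullet> g x1) \<ge> 0"
proof -
  define t where "t = hh / L"
  define a where "a = (norm (g x0))\<^sup>2"
  define b where "b = (norm (g x1))\<^sup>2"
  define c where "c = g x0 \<bullet> g x1"
  define u where "u = 1 - \<mu> * t"
  define W where "W = u\<^sup>2 * a - 2 * u * c + b"
  have d01: "x0 - x1 = t *\<^sub>R g x0" unfolding x1 t_def by simp
  have d10: "x1 - x0 = - (t *\<^sub>R g x0)" unfolding x1 t_def by simp
  have n01: "(norm (x0 - x1))\<^sup>2 = t\<^sup>2 * a" unfolding d01 a_def by (simp add: power_mult_distrib)
  have n10: "(norm (x1 - x0))\<^sup>2 = t\<^sup>2 * a" unfolding d10 a_def by (simp add: power_mult_distrib)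
  have wv: "(norm (u *\<^sub>R g x0 - g x1))\<^sup>2 = W"
    unfolding W_def a_def b_def c_def power2_norm_eq_inner
    by (simp add: inner_diff_left inner_diff_right inner_commute power2_eq_square algebra_simps)
  have wA: "(norm (g x0 - g x1 - \<mu> *\<^sub>R (x0 - x1)))\<^sup>2 = W"
  proof -
    have e: "g x0 - g x1 - \<mu> *\<^sub>R (x0 - x1) = u *\<^sub>R g x0 - g x1"
      unfolding d01 u_def by (simp add: algebra_simps)
    show ?thesis unfolding e by (rule wv)
  qed
  have wB: "(norm (g x1 - g x0 - \<mu> *\<^sub>R (x1 - x0)))\<^sup>2 = W"
  proof -
    have e: "g x1 - g x0 - \<mu> *\<^sub>R (x1 - x0) = - (u *\<^sub>R g x0 - g x1)"
      unfolding d10 u_def by (simp add: algebra_simps)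
    show ?thesis unfolding e norm_minus_cancel by (rule wv)
  qed
  have iA': "f x0 - f x1 \<ge> t * c + \<mu> / 2 * (t\<^sup>2 * a) + W / (2 * (L - \<mu>))"
    using iA unfolding n01 wA unfolding d01 c_def by (simp add: inner_commute)
  have iB': "- (f x0 - f x1) \<ge> - (t * a) + \<mu> / 2 * (t\<^sup>2 * a) + W / (2 * (L - \<mu>))"
    using iB unfolding n10 wB unfolding d10 a_def by (simp add: power2_norm_eq_inner)
  have Lm: "L - \<mu> > 0" using L mu by simp
  have k1: "2 * L * (1 - \<mu> / L) = 2 * (L - \<mu>)" using L by (simp add: field_simps)
  have ku: "u = 1 - (\<mu> / L) * hh" unfolding u_def t_def by simp
  have kc: "2 * (L - \<mu>) * (t * c) = 2 * hh * (1 - \<mu> / L) * c" unfolding t_def using L by (simp add: field_simps)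
  have ka: "2 * (L - \<mu>) * (t * a) = 2 * hh * (1 - \<mu> / L) * a" unfolding t_def using L by (simp add: field_simps)
  have kq: "2 * (L - \<mu>) * (\<mu> / 2 * (t\<^sup>2 * a)) = (\<mu> / L) * (1 - \<mu> / L) * hh\<^sup>2 * a"
    unfolding t_def using L by (simp add: field_simps power2_eq_square)
  have kW: "2 * (L - \<mu>) * (W / (2 * (L - \<mu>))) = W" using Lm by simp
  have WW: "W = (1 - (\<mu> / L) * hh)\<^sup>2 * a - 2 * (1 - (\<mu> / L) * hh) * c + b" unfolding W_def ku ..
  have A2: "2 * (L - \<mu>) * (f x0 - f x1) \<ge> 2 * (L - \<mu>) * (t * c + \<mu> / 2 * (t\<^sup>2 * a) + W / (2 * (L - \<mu>)))"
    using iA' Lm by (intro mult_left_mono) auto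
  have B2: "2 * (L - \<mu>) * (- (f x0 - f x1)) \<ge> 2 * (L - \<mu>) * (- (t * a) + \<mu> / 2 * (t\<^sup>2 * a) + W / (2 * (L - \<mu>)))"
    using iB' Lm by (intro mult_left_mono) auto
  show "2 * L * (1 - \<mu> / L) * (f x0 - f x1) \<ge> 2 * hh * (1 - \<mu> / L) * (g x0 \<bullet> g x1) + (\<mu> / L) * (1 - \<mu> / L) * hh\<^sup>2 * (norm (g x0))\<^sup>2 + (1 - (\<mu> / L) * hh)\<^sup>2 * (norm (g x0))\<^sup>2 - 2 * (1 - (\<mu> / L) * hh) * (g x0 \<bullet> g x1) + (norm (g x1))\<^sup>2"
    using A2 unfolding k1 distrib_left kc kq kW unfolding WW a_def b_def c_def by linarith
  show "- (2 * L * (1 - \<mu> / L) * (f x0 - f x1)) \<ge> - 2 * hh * (1 - \<mu> / L) * (norm (g x0))\<^sup>2 + (\<mu> / L) * (1 - \<mu> / L) * hh\<^sup>2 * (norm (g x0))\<^sup>2 + (1 - (\<mu> / L) * hh)\<^sup>2 * (norm (g x0))\<^sup>2 - 2 * (1 - (\<mu> / L) * hh) * (g x0 \<bullet> g x1) + (norm (g x1))\<^sup>2"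
  proof -
    have "2 * (L - \<mu>) * (- (t * a)) = - (2 * hh * (1 - \<mu> / L) * a)" using ka by simp
    thus ?thesis using B2 unfolding k1 distrib_left kq kW unfolding WW a_def b_def c_def by linarith
  qed
  have "0 \<le> (norm (g x0 - g x1))\<^sup>2" by simp
  thus "(norm (g x0))\<^sup>2 + (norm (g x1))\<^sup>2 - 2 * (g x0 \<bullet> g x1) \<ge> 0"
    unfolding power2_norm_eq_inner by (simp add: inner_diff_left inner_diff_right inner_commute)
qed

theorem theorem4p2:
  fixes f :: "'a::euclidean_space \<Rightarrow> real"
    and g :: "'a \<Rightarrow> 'a"
    and L \<mu> :: real and N :: nat
    and h :: "nat \<Rightarrow> real" and x :: "nat \<Rightarrow> 'a"
  assumes N_pos: "N \<ge> 1"
    and L_pos: "L > 0"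
    and mu_nonpos: "\<mu> \<le> 0"
    and f_class: "smooth_weakly_convex_class \<mu> L f"
    and grad: "\<And>y. (f has_derivative (\<lambda>v. g y \<bullet> v)) (at y)"
    and steps: "\<And>i. i < N \<Longrightarrow> 0 < h i \<and> h i \<le> hbar (\<mu> / L)"
    and iter: "\<And>i. i < N \<Longrightarrow> x (Suc i) = x i - (h i / L) *\<^sub>R g (x i)"
  shows "(MIN i\<in>{0..N}. (norm (g (x i)))\<^sup>2)
           \<le> 2 * L * (f (x 0) - f (x N)) / (\<Sum>i<N. pfun (h i) (\<mu> / L))
         \<and> (bdd_below (range f) \<longrightarrow>
         (MIN i\<in>{0..N}. (norm (g (x i)))\<^sup>2)
           \<le> 2 * L * (f (x 0) - (INF y. f y)) / (1 + (\<Sum>i<N. pfun (h i) (\<mu> / L))))"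
proof -
  define m where "m = (MIN i\<in>{0..N}. (norm (g (x i)))\<^sup>2)"
  define K where "K = \<mu> / L"
  have mle: "m \<le> (norm (g (x i)))\<^sup>2" if "i \<le> N" for i
    unfolding m_def using that by (intro Min_le) auto
  have K0: "K \<le> 0" unfolding K_def using mu_nonpos L_pos by (simp add: divide_nonpos_pos)
  have step: "pfun (h i) K * m \<le> 2 * L * (f (x i) - f (x (Suc i))) \<and> pfun (h i) K > 0" if i: "i < N" for i
  proof -
    note vs = vec_to_scalar[OF L_pos mu_nonpos
        interp[OF L_pos mu_nonpos f_class grad, where x="x i" and y="x (Suc i)"]
        interp[OF L_pos mu_nonpos f_class grad, where x="x (Suc i)" and y="x i"] iter[OF i]]
    show ?thesis
      by (rule scalar_step[OF L_pos K0 _ _ vs[folded K_def]])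
         (use steps[OF i] mle[of i] mle[of "Suc i"] i K_def in auto)
  qed
  define S where "S = (\<Sum>i<N. pfun (h i) K)"
  have Spos: "S > 0" unfolding S_def
    using N_pos step by (intro sum_pos) (auto simp: lessThan_empty_iff)
  have "m * S = (\<Sum>i<N. pfun (h i) K * m)" unfolding S_def by (simp add: sum_distrib_left mult.commute)
  also have "\<dots> \<le> (\<Sum>i<N. 2 * L * (f (x i) - f (x (Suc i))))"
    using step by (intro sum_mono) auto
  also have "\<dots> = 2 * L * (f (x 0) - f (x N))"
    using sum_lessThan_telescope'[of "\<lambda>i. f (x i)" N] by (simp add: sum_distrib_left[symmetric])
  finally have main: "m * S \<le> 2 * L * (f (x 0) - f (x N))" .
  have part1: "m \<le> 2 * L * (f (x 0) - f (x N)) / S"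
    using main Spos by (simp add: pos_le_divide_eq)
  have part2: "m \<le> 2 * L * (f (x 0) - (INF y. f y)) / (1 + S)" if bb: "bdd_below (range f)"
  proof -
    define y where "y = x N - (1 / L) *\<^sub>R g (x N)"
    have "(INF y. f y) \<le> f y" using bb by (intro cINF_lower) auto
    moreover have "f y \<le> f (x N) + g (x N) \<bullet> (y - x N) + L / 2 * (norm (y - x N))\<^sup>2"
      by (rule descent[OF L_pos mu_nonpos f_class grad])
    moreover have "g (x N) \<bullet> (y - x N) = - (norm (g (x N)))\<^sup>2 / L"
      unfolding y_def by (simp add: power2_norm_eq_inner)
    moreover have "L / 2 * (norm (y - x N))\<^sup>2 = (norm (g (x N)))\<^sup>2 / (2 * L)"
      unfolding y_def using L_pos by (simp add: power2_eq_square field_simps)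
    ultimately have "(INF y. f y) \<le> f (x N) - (norm (g (x N)))\<^sup>2 / (2 * L)" by simp
    hence "2 * L * (INF y. f y) \<le> 2 * L * f (x N) - (norm (g (x N)))\<^sup>2"
      using L_pos by (simp add: field_simps)
    moreover have "m \<le> (norm (g (x N)))\<^sup>2" by (rule mle) simp
    ultimately have "m * (1 + S) \<le> 2 * L * (f (x 0) - (INF y. f y))"
      using main by (simp add: algebra_simps)
    thus ?thesis using Spos by (simp add: pos_le_divide_eq add_pos_pos)
  qed
  show ?thesis using part1 part2 unfolding m_def[symmetric] S_def K_def by simp
qed

end
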